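(* Let $N\ge1$ and $W=W_N:=1+\sum_{n=1}^N\frac{P_{n-1}(y)}{x^n}\in A$. Then there are polynomials $u(y),v(y),\dots$ such that \[ W-1-\frac{y}{x}+\frac{1}{x}W+W_x+\frac{1}{x}W_y-\frac{1}{x}\log W=-\frac{P_N(y)}{x^{N+1}}+\frac{u(y)}{x^{N+2}}+\frac{v(y)}{x^{N+3}}+\cdots \]
   Context: Let $A$ be the ring of formal series $a=\sum_{n=0}^\infty \frac{q_n(y)}{x^n}$, each $q_n$ a complex polynomial of degree at most $n$, with the obvious ring operations and the $x^{-1}$-adic topology. Formal derivatives: $a_x=-\sum_{n\ge1}\frac{n q_n(y)}{x^{n+1}}$, $a_y=\sum_{n\ge1}\frac{q_n'(y)}{x^n}$. For $1+u\in A$ with $u$ having zero constant term, $\log(1+u)=\sum_{k\ge1}(-1)^{k+1}u^k/k$. Let $V$ be the unique solution in $A$ of $V=1+\frac{y}{x}-\frac{1}{x}V-V_x-\frac{1}{x}V_y+\frac{1}{x}\log V$, and define the polynomials $P_{n-1}$ ($n\ge1$) by $V=1+\sum_{n=1}^\infty\frac{P_{n-1}(y)}{x^n}$. *)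

theory Defs
  imports "HOL-Computational_Algebra.Polynomial"
begin

text \<open>An element a = sum_n q_n(y)/x^n of the ring A is represented by its coefficient
  sequence q :: nat => complex poly (q n = coefficient of x^(-n)).\<close>

type_synonym ser = "nat \<Rightarrow> complex poly"

definition inA :: "ser \<Rightarrow> bool" where
  "inA a \<longleftrightarrow> (\<forall>n. degree (a n) \<le> n)"

definition sone :: ser where
  "sone n = (if n = 0 then 1 else 0)"

definition s_yx :: ser where
  "s_yx n = (if n = 1 then [:0, 1:] else 0)"

definition smul :: "ser \<Rightarrow> ser \<Rightarrow> ser" where
  "smul a b n = (\<Sum>i\<le>n. a i * b (n - i))"

fun spow :: "ser \<Rightarrow> nat \<Rightarrow> ser" where
  "spow a 0 = sone"
| "spow a (Suc k) = smul a (spow a k)"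

definition sshift :: "ser \<Rightarrow> ser" where
  "sshift a n = (if n = 0 then 0 else a (n - 1))"

text \<open>a_x = - sum_{n>=1} n q_n / x^(n+1)\<close>
definition sdx :: "ser \<Rightarrow> ser" where
  "sdx a n = (if n = 0 then 0 else - smult (of_nat (n - 1)) (a (n - 1)))"

definition sdy :: "ser \<Rightarrow> ser" where
  "sdy a n = pderiv (a n)"

text \<open>log a = log(1+u), u = a - 1, = sum_{k>=1} (-1)^(k+1) u^k / k ; since u^k has no
  terms of order < k in 1/x (when u has zero constant term), the coefficient of x^(-n)
  only involves k <= n.\<close>
definition slog :: "ser \<Rightarrow> ser" where
  "slog a n = (\<Sum>k\<in>{1..n}. smult ((-1) ^ (k + 1) / of_nat k)
                   (spow (\<lambda>m. a m - sone m) k n))"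

definition Veq :: "ser \<Rightarrow> bool" where
  "Veq V \<longleftrightarrow> (\<forall>n. V n = sone n + s_yx n - sshift V n - sdx V n
                        - sshift (sdy V) n + sshift (slog V) n)"

definition Vsol :: ser where
  "Vsol = (THE V. inA V \<and> Veq V)"

definition P :: "nat \<Rightarrow> complex poly" where
  "P m = Vsol (Suc m)"

end

theory Submission
  imports Defs
begin

definition F :: "ser \<Rightarrow> ser" where
  "F a n = sone n + s_yx n - sshift a n - sdx a n - sshift (sdy a) n + sshift (slog a) n"

lemma smul_loc: "(\<forall>m\<le>k. a m = a' m) \<Longrightarrow> (\<forall>m\<le>k. b m = b' m) \<Longrightarrow> smul a b k = smul a' b' k"
  unfolding smul_def by (intro sum.cong) auto

lemma spow_loc: "(\<forall>m\<le>k. a m = a' m) \<Longrightarrow> j \<le> k \<Longrightarrow> spow a i j = spow a' i j"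
proof (induction i arbitrary: j)
  case 0 then show ?case by simp
next
  case (Suc i)
  then show ?case by (simp, intro smul_loc) auto
qed

lemma slog_loc: "(\<forall>m\<le>k. a m = a' m) \<Longrightarrow> slog a k = slog a' k"
  unfolding slog_def
proof (intro sum.cong refl)
  fix x assume "\<forall>m\<le>k. a m = a' m"
  then have "\<forall>m\<le>k. a m - sone m = a' m - sone m" by auto
  then show "smult ((- 1) ^ (x + 1) / of_nat x) (spow (\<lambda>m. a m - sone m) x k) =
         smult ((- 1) ^ (x + 1) / of_nat x) (spow (\<lambda>m. a' m - sone m) x k)"
    using spow_loc[of k "\<lambda>m. a m - sone m" "\<lambda>m. a' m - sone m" k x] by simp
qed

lemma F_loc: "(\<forall>m<n. a m = b m) \<Longrightarrow> F a n = F b n"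
proof (cases n)
  case 0 then show ?thesis by (simp add: F_def sshift_def sdx_def)
next
  case (Suc k)
  assume h: "\<forall>m<n. a m = b m"
  then have "\<forall>m\<le>k. a m = b m" using Suc by auto
  then have "slog a k = slog b k" by (rule slog_loc)
  moreover have "a k = b k" using h Suc by auto
  ultimately show ?thesis using Suc by (simp add: F_def sshift_def sdx_def sdy_def)
qed

lemma inA_sone: "inA sone" unfolding inA_def sone_def by auto

lemma inA_smul: "inA a \<Longrightarrow> inA b \<Longrightarrow> inA (smul a b)"
  unfolding inA_def smul_def
proof (intro allI degree_sum_le)
  fix n i :: nat assume a: "\<forall>n. degree (a n) \<le> n" and b: "\<forall>n. degree (b n) \<le> n" and i: "i \<in> {..n}"
  have "degree (a i * b (n - i)) \<le> degree (a i) + degree (b (n - i))" by (rule degree_mult_le)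
  also have "\<dots> \<le> i + (n - i)" using a b by (meson add_mono)
  also have "\<dots> = n" using i by auto
  finally show "degree (a i * b (n - i)) \<le> n" .
qed simp

lemma inA_spow: "inA a \<Longrightarrow> inA (spow a k)"
  by (induction k) (auto intro: inA_smul inA_sone)

lemma inA_sub_sone: "inA a \<Longrightarrow> inA (\<lambda>m. a m - sone m)"
  unfolding inA_def
proof (intro allI)
  fix n assume a: "\<forall>n. degree (a n) \<le> n"
  have "degree (sone n) \<le> n" using inA_sone unfolding inA_def by auto
  then show "degree (a n - sone n) \<le> n" using a degree_diff_le by blast
qed

lemma inA_slog: "inA a \<Longrightarrow> inA (slog a)"
proof -
  assume a: "inA a"
  have s: "\<And>k. inA (spow (\<lambda>m. a m - sone m) k)" using inA_spow inA_sub_sone a by blast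
  show ?thesis unfolding inA_def slog_def
  proof (intro allI degree_sum_le)
    fix n k
    show "degree (smult ((- 1) ^ (k + 1) / of_nat k) (spow (\<lambda>m. a m - sone m) k n)) \<le> n"
      using s[of k] unfolding inA_def by (meson degree_smult_le order.trans)
  qed simp
qed

lemma inA_F: "inA a \<Longrightarrow> inA (F a)"
proof -
  assume a: "inA a"
  have l: "inA (slog a)" using a by (rule inA_slog)
  show ?thesis unfolding inA_def
  proof
    fix n
    have d1: "degree (sone n) \<le> n" using inA_sone unfolding inA_def by auto
    have d2: "degree (s_yx n) \<le> n" unfolding s_yx_def by auto
    have d3: "degree (sshift a n) \<le> n" using a unfolding inA_def sshift_def by (simp, meson diff_le_self le_trans)
    have d4: "degree (sdx a n) \<le> n"
    proof (cases "n = 0")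
      case False
      have "degree (smult (of_nat (n - 1)) (a (n - 1))) \<le> degree (a (n - 1))" by (rule degree_smult_le)
      also have "\<dots> \<le> n" using a unfolding inA_def by (meson diff_le_self le_trans)
      finally show ?thesis using False by (simp add: sdx_def)
    qed (simp add: sdx_def)
    have d5: "degree (sshift (sdy a) n) \<le> n" using a unfolding inA_def sshift_def sdy_def
      by (simp add: degree_pderiv, meson diff_le_self le_trans)
    have d6: "degree (sshift (slog a) n) \<le> n" using l unfolding inA_def sshift_def by (simp, meson diff_le_self le_trans)
    have e1: "degree (sone n + s_yx n) \<le> n" using d1 d2 by (rule degree_add_le)
    have e2: "degree (sone n + s_yx n - sshift a n) \<le> n" using e1 d3 by (rule degree_diff_le)
    have e3: "degree (sone n + s_yx n - sshift a n - sdx a n) \<le> n" using e2 d4 by (rule degree_diff_le)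
    have e4: "degree (sone n + s_yx n - sshift a n - sdx a n - sshift (sdy a) n) \<le> n"
      using e3 d5 by (rule degree_diff_le)
    have e5: "degree (sone n + s_yx n - sshift a n - sdx a n - sshift (sdy a) n + sshift (slog a) n) \<le> n"
      using e4 d6 by (rule degree_add_le)
    then show "degree (F a n) \<le> n" unfolding F_def .
  qed
qed

definition z0 :: ser where "z0 = (\<lambda>_. 0)"

lemma iter_step: "\<forall>m<k. (F ^^ k) z0 m = (F ^^ Suc k) z0 m"
proof (induction k)
  case 0 then show ?case by blast
next
  case (Suc k)
  show ?case
  proof (intro allI impI)
    fix m assume m: "m < Suc k"
    have "\<forall>m'<m. (F ^^ k) z0 m' = (F ^^ Suc k) z0 m'"
    proof (intro allI impI)
      fix m' assume "m' < m"
      then have "m' < k" using m by linarith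
      then show "(F ^^ k) z0 m' = (F ^^ Suc k) z0 m'" using Suc.IH by blast
    qed
    then have "F ((F ^^ k) z0) m = F ((F ^^ Suc k) z0) m" by (rule F_loc)
    then show "(F ^^ Suc k) z0 m = (F ^^ Suc (Suc k)) z0 m"
      by (simp only: funpow.simps comp_apply)
  qed
qed

lemma iter_stable: assumes "m < k" "k \<le> j" shows "(F ^^ j) z0 m = (F ^^ k) z0 m"
  using assms(2)
proof (induction j rule: dec_induct)
  case base then show ?case by (rule refl)
next
  case (step j)
  have "m < j" using assms(1) step.hyps(1) by linarith
  then have "(F ^^ j) z0 m = (F ^^ Suc j) z0 m" using iter_step[of j] by blast
  then show ?case using step.IH by (rule subst)
qed

definition Vc :: ser where "Vc n = (F ^^ Suc n) z0 n"

lemma Vc_fix: "Vc n = F Vc n"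
proof -
  have "\<forall>m<n. Vc m = (F ^^ n) z0 m"
  proof (intro allI impI)
    fix m assume "m < n"
    then have "(F ^^ n) z0 m = (F ^^ Suc m) z0 m" by (intro iter_stable) auto
    then show "Vc m = (F ^^ n) z0 m" unfolding Vc_def by (rule sym)
  qed
  then have "F Vc n = F ((F ^^ n) z0) n" by (rule F_loc)
  also have "\<dots> = Vc n" unfolding Vc_def by (simp only: funpow.simps comp_apply)
  finally show ?thesis by (rule sym)
qed

lemma inA_iter: "inA ((F ^^ k) z0)"
proof (induction k)
  case 0 show ?case by (simp add: inA_def z0_def)
next
  case (Suc k) then show ?case by (simp add: inA_F)
qed

lemma inA_Vc: "inA Vc"
  using inA_iter unfolding inA_def Vc_def by blast

lemma Veq_F: "Veq V \<longleftrightarrow> (\<forall>n. V n = F V n)"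
  unfolding Veq_def F_def by simp

lemma F_unique: "\<forall>n. a n = F a n \<Longrightarrow> \<forall>n. b n = F b n \<Longrightarrow> a n = b n"
proof (induction n rule: less_induct)
  case (less n)
  have ab: "\<forall>m<n. a m = b m" using less.IH less.prems by blast
  have "a n = F a n" using less.prems(1) by (rule spec)
  also have "\<dots> = F b n" using ab by (rule F_loc)
  also have "\<dots> = b n"
  proof -
    from less.prems(2) have "b n = F b n" by (rule spec)
    then show ?thesis by (rule sym)
  qed
  finally show ?case .
qed

lemma Vsol_eq: "Vsol = Vc"
  unfolding Vsol_def
proof (rule the_equality)
  have "\<forall>n. Vc n = F Vc n" using Vc_fix by (rule allI)
  then show "inA Vc \<and> Veq Vc" using inA_Vc unfolding Veq_F by (rule conjI[rotated])
next
  fix V assume "inA V \<and> Veq V"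
  then have h: "\<forall>n. V n = F V n" using Veq_F by blast
  have "\<forall>n. Vc n = F Vc n" using Vc_fix by (rule allI)
  then show "V = Vc" using F_unique[OF h] by (intro ext) blast
qed

lemma Vsol_fix: "Vsol n = F Vsol n"
  unfolding Vsol_eq by (rule Vc_fix)

theorem theorem4p3:
  fixes N :: nat and W E :: ser
  assumes "N \<ge> 1"
    and "W = (\<lambda>n. if n = 0 then 1 else if n \<le> N then P (n - 1) else 0)"
    and "E = (\<lambda>n. W n - sone n - s_yx n + sshift W n + sdx W n
                  + sshift (sdy W) n - sshift (slog W) n)"
  shows "(\<forall>n\<le>N. E n = 0) \<and> E (N + 1) = - P N"
proof -
  have E: "\<And>n. E n = W n - F W n" using assms(3) unfolding F_def by (simp add: algebra_simps)
  have "F Vsol 0 = 1" by (simp add: F_def sone_def s_yx_def sshift_def sdx_def)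
  then have V0: "Vsol 0 = 1" using Vsol_fix[of 0] by metis
  have WV: "\<And>m. m \<le> N \<Longrightarrow> W m = Vsol m"
    using assms(2) V0 by (auto simp: P_def)
  have FW: "\<And>n. n \<le> Suc N \<Longrightarrow> F W n = F Vsol n"
    by (rule F_loc) (auto intro: WV)
  have 1: "\<forall>n\<le>N. E n = 0"
  proof (intro allI impI)
    fix n assume n: "n \<le> N"
    have "F W n = F Vsol n" using FW n by simp
    also have "\<dots> = Vsol n" by (rule Vsol_fix[symmetric])
    also have "\<dots> = W n" using WV n by metis
    finally show "E n = 0" using E[of n] by simp
  qed
  have "F W (Suc N) = F Vsol (Suc N)" using FW[of "Suc N"] by simp
  also have "\<dots> = P N" unfolding P_def by (rule Vsol_fix[symmetric])
  finally have a: "F W (Suc N) = P N" .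
  have b: "W (Suc N) = 0" using assms(2) by simp
  have "E (N + 1) = - P N" using E[of "Suc N"] a b by simp
  then show ?thesis using 1 by simp
qed

end
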